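(* Let $A$ be a finite nonempty set and $M\subseteq A^A$. Then $\overline{M}=\mathrm{End}\,\mathrm{gQuord}\,M$.
   Context: A relation $\rho\subseteq A^m$ is a generalized quasiorder if it is reflexive ($(a,\dots,a)\in\rho$ for all $a$) and transitive: for every $m\times m$-matrix over $A$ all of whose rows and columns belong to $\rho$, its diagonal belongs to $\rho$. $\mathrm{gQuord}(A)$ denotes the set of all generalized quasiorders on $A$ (of all arities). A unary map $h$ preserves $\rho$ if $(h x_1,\dots,h x_m)\in\rho$ whenever $(x_1,\dots,x_m)\in\rho$. For $M\subseteq A^A$, $\mathrm{gQuord}\,M$ is the set of all $\rho\in\mathrm{gQuord}(A)$ preserved by every $h\in M$; for $Q\subseteq\mathrm{gQuord}(A)$, $\mathrm{End}\,Q$ is the set of all $h\in A^A$ preserving every $\rho\in Q$. A translation of an $n$-ary operation $f$ is a unary map $x\mapsto f(a_1,\dots,a_{i-1},x,a_{i+1},\dots,a_n)$ with fixed $a_j\in A$; $\mathrm{trl}(f)$ is the set of translations ($\{f\}$ for unary $f$); $N^*:=\{f\mid \mathrm{trl}(f)\subseteq N\}$. The u-closure $\overline M$ is the intersection of all monoids $N$ with $M\subseteq N\le A^A$ such that $N^*$ is a clone. *)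

theory Defs
  imports Main
begin

(* The finite nonempty base set A is the universe of a type 'a::finite.
   An m-tuple over A is a list of length m; an m-ary relation is a set of such lists.
   Relations of all arities are represented as pairs (m, rho). *)

definition gquord :: "nat \<Rightarrow> 'a list set \<Rightarrow> bool" where
  "gquord m rho \<longleftrightarrow>
     rho \<subseteq> {xs. length xs = m} \<and>
     (\<forall>a. replicate m a \<in> rho) \<and>
     (\<forall>X :: nat \<Rightarrow> nat \<Rightarrow> 'a.
        (\<forall>i<m. map (\<lambda>j. X i j) [0..<m] \<in> rho) \<and>
        (\<forall>j<m. map (\<lambda>i. X i j) [0..<m] \<in> rho)
        \<longrightarrow> map (\<lambda>i. X i i) [0..<m] \<in> rho)"

definition gQuord_all :: "(nat \<times> 'a list set) set" where
  "gQuord_all = {(m, rho). gquord m rho}"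

definition preserves :: "('a \<Rightarrow> 'a) \<Rightarrow> 'a list set \<Rightarrow> bool" where
  "preserves h rho \<longleftrightarrow> (\<forall>xs\<in>rho. map h xs \<in> rho)"

definition gQuord_of :: "('a \<Rightarrow> 'a) set \<Rightarrow> (nat \<times> 'a list set) set" where
  "gQuord_of M = {(m, rho) \<in> gQuord_all. \<forall>h\<in>M. preserves h rho}"

definition End_of :: "(nat \<times> 'a list set) set \<Rightarrow> ('a \<Rightarrow> 'a) set" where
  "End_of Q = {h. \<forall>(m, rho)\<in>Q. preserves h rho}"

(* Finitary operations: an n-ary operation (n \<ge> 1) is f :: 'a list \<Rightarrow> 'a,
   considered on lists of length n. A set of operations is a predicate C n f. *)

definition trl :: "nat \<Rightarrow> ('a list \<Rightarrow> 'a) \<Rightarrow> ('a \<Rightarrow> 'a) set" where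
  "trl n f = {(\<lambda>x. f (as[i := x])) | i as. i < n \<and> length as = n}"

definition star :: "('a \<Rightarrow> 'a) set \<Rightarrow> nat \<Rightarrow> ('a list \<Rightarrow> 'a) \<Rightarrow> bool" where
  "star N n f \<longleftrightarrow> trl n f \<subseteq> N"

definition is_clone :: "(nat \<Rightarrow> ('a list \<Rightarrow> 'a) \<Rightarrow> bool) \<Rightarrow> bool" where
  "is_clone C \<longleftrightarrow>
     (\<forall>n i. 1 \<le> n \<and> i < n \<longrightarrow> C n (\<lambda>xs. xs ! i)) \<and>
     (\<forall>n k f gs. 1 \<le> n \<and> 1 \<le> k \<and> C n f \<and> length gs = n \<and> (\<forall>g\<in>set gs. C k g)
        \<longrightarrow> C k (\<lambda>xs. f (map (\<lambda>g. g xs) gs)))"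

definition is_monoid :: "('a \<Rightarrow> 'a) set \<Rightarrow> bool" where
  "is_monoid N \<longleftrightarrow> id \<in> N \<and> (\<forall>g\<in>N. \<forall>h\<in>N. g \<circ> h \<in> N)"

definition u_closure :: "('a \<Rightarrow> 'a) set \<Rightarrow> ('a \<Rightarrow> 'a) set" where
  "u_closure M = \<Inter> {N. M \<subseteq> N \<and> is_monoid N \<and> is_clone (star N)}"

end

theory Submission
  imports Defs
begin

lemma trl_preserve_gen:
  assumes g: "gquord m rho" and tr: "\<forall>t\<in>trl n f. preserves t rho"
  shows "k \<le> n \<Longrightarrow> (\<forall>j<k. map (R j) [0..<m] \<in> rho) \<Longrightarrow>
    (\<forall>j. k \<le> j \<and> j < n \<longrightarrow> (\<forall>l<m. R j l = R j 0)) \<Longrightarrow>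
    map (\<lambda>l. f (map (\<lambda>j. R j l) [0..<n])) [0..<m] \<in> rho"
proof (induction k arbitrary: R)
  case 0
  have "map (\<lambda>l. f (map (\<lambda>j. R j l) [0..<n])) [0..<m] = replicate m (f (map (\<lambda>j. R j 0) [0..<n]))"
  proof (rule nth_equalityI)
    fix l assume "l < length (map (\<lambda>l. f (map (\<lambda>j. R j l) [0..<n])) [0..<m])"
    hence l: "l < m" by simp
    have "map (\<lambda>j. R j l) [0..<n] = map (\<lambda>j. R j 0) [0..<n]"
    proof (rule map_cong[OF refl])
      fix j assume "j \<in> set [0..<n]"
      hence "j < n" by simp
      thus "R j l = R j 0" using 0(3) l by blast
    qed
    hence eq: "f (map (\<lambda>j. R j l) [0..<n]) = f (map (\<lambda>j. R j 0) [0..<n])" by (rule arg_cong)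
    have "map (\<lambda>l. f (map (\<lambda>j. R j l) [0..<n])) [0..<m] ! l = f (map (\<lambda>j. R j l) [0..<n])"
      using l by simp
    also have "\<dots> = replicate m (f (map (\<lambda>j. R j 0) [0..<n])) ! l" using l eq by simp
    finally show "map (\<lambda>l. f (map (\<lambda>j. R j l) [0..<n])) [0..<m] ! l = replicate m (f (map (\<lambda>j. R j 0) [0..<n])) ! l" .
  qed simp
  moreover have "\<forall>a. replicate m a \<in> rho" using g unfolding gquord_def by blast
  ultimately show ?case by simp
next
  case (Suc k)
  define X where "X i j' = f (map (\<lambda>j. if j<k then R j i else if j = k then R k j' else R j 0) [0..<n])" for i j'
  have kn: "k < n" using Suc.prems by simp
  have rows: "\<forall>i<m. map (\<lambda>j'. X i j') [0..<m] \<in> rho"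
  proof (intro allI impI)
    fix i assume i: "i<m"
    define as where "as = map (\<lambda>j. if j<k then R j i else R j 0) [0..<n]"
    have t: "(\<lambda>x. f (as[k:=x])) \<in> trl n f"
      unfolding trl_def by (rule CollectI, rule exI[of _ k], rule exI[of _ as]) (simp add: as_def kn)
    have "map (R k) [0..<m] \<in> rho" using Suc.prems by auto
    hence mem: "map (\<lambda>x. f (as[k:=x])) (map (R k) [0..<m]) \<in> rho" using tr t preserves_def by blast
    have "\<And>x. as[k:=x] = map (\<lambda>j. if j<k then R j i else if j=k then x else R j 0) [0..<n]"
      by (auto simp: as_def nth_list_update intro!: nth_equalityI)
    hence eq: "map (\<lambda>x. f (as[k:=x])) (map (R k) [0..<m]) = map (\<lambda>j'. X i j') [0..<m]"
      by (simp add: X_def)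
    show "map (\<lambda>j'. X i j') [0..<m] \<in> rho" using mem unfolding eq .
  qed
  have cols: "\<forall>j'<m. map (\<lambda>i. X i j') [0..<m] \<in> rho"
  proof (intro allI impI)
    fix j' assume j': "j'<m"
    define R' where "R' j l = (if j<k then R j l else if j=k then R k j' else R j 0)" for j l
    have "map (\<lambda>l. f (map (\<lambda>j. R' j l) [0..<n])) [0..<m] \<in> rho"
    proof (rule Suc.IH)
      show "k \<le> n" using kn by simp
      show "\<forall>j<k. map (R' j) [0..<m] \<in> rho"
      proof (intro allI impI)
        fix j assume "j<k"
        hence eq: "map (R' j) [0..<m] = map (R j) [0..<m]" by (auto simp: R'_def)
        have "map (R j) [0..<m] \<in> rho" using Suc.prems(2) \<open>j<k\<close> by simp
        thus "map (R' j) [0..<m] \<in> rho" unfolding eq .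
      qed
      show "\<forall>j. k \<le> j \<and> j < n \<longrightarrow> (\<forall>l<m. R' j l = R' j 0)" by (auto simp: R'_def)
    qed
    moreover have "map (\<lambda>l. f (map (\<lambda>j. R' j l) [0..<n])) [0..<m] = map (\<lambda>i. X i j') [0..<m]"
      by (simp add: X_def R'_def)
    ultimately show "map (\<lambda>i. X i j') [0..<m] \<in> rho" by (simp only:)
  qed
  have "map (\<lambda>i. X i i) [0..<m] \<in> rho" using g rows cols unfolding gquord_def by blast
  moreover have "map (\<lambda>i. X i i) [0..<m] = map (\<lambda>l. f (map (\<lambda>j. R j l) [0..<n])) [0..<m]"
  proof (rule map_cong[OF refl])
    fix i assume "i \<in> set [0..<m]"
    hence i: "i < m" by simp
    have "map (\<lambda>j. if j<k then R j i else if j = k then R k i else R j 0) [0..<n] = map (\<lambda>j. R j i) [0..<n]"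
    proof (rule map_cong[OF refl])
      fix j assume j: "j \<in> set [0..<n]"
      show "(if j<k then R j i else if j = k then R k i else R j 0) = R j i"
      proof (cases "j \<le> k")
        case True thus ?thesis by auto
      next
        case False
        hence "Suc k \<le> j" "j < n" using j by auto
        hence "R j i = R j 0" using Suc.prems(3) i by blast
        thus ?thesis using False by simp
      qed
    qed
    thus "X i i = f (map (\<lambda>j. R j i) [0..<n])" unfolding X_def by (rule arg_cong)
  qed
  ultimately show ?case by simp
qed

lemma gquord_len: "gquord m rho \<Longrightarrow> xs \<in> rho \<Longrightarrow> length xs = m"
  unfolding gquord_def by auto

lemma End_clone:
  fixes M :: "('a \<Rightarrow> 'a) set"
  shows "is_clone (star (End_of (gQuord_of M)))"
  unfolding is_clone_def
proof (intro conjI allI impI)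
  fix n i :: nat assume ni: "1 \<le> n \<and> i < n"
  show "star (End_of (gQuord_of M)) n (\<lambda>xs. xs ! i)"
    unfolding star_def
  proof
    fix t :: "'a \<Rightarrow> 'a" assume "t \<in> trl n (\<lambda>xs. xs ! i)"
    then obtain i' as where t: "t = (\<lambda>x. (as[i':=x]) ! i)" and "i' < n" "length as = n"
      unfolding trl_def by auto
    show "t \<in> End_of (gQuord_of M)"
    proof (cases "i' = i")
      case True
      hence "t = (\<lambda>x. x)" using t ni \<open>length as = n\<close> by auto
      thus ?thesis unfolding End_of_def preserves_def by auto
    next
      case False
      hence tc: "t = (\<lambda>x. as ! i)" using t by auto
      show ?thesis unfolding End_of_def preserves_def gQuord_of_def gQuord_all_def
      proof (clarsimp)
        fix m rho and xs :: "'a list" assume "gquord m rho" "xs \<in> rho"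
        hence "map t xs = replicate m (as ! i)" using tc gquord_len by (simp add: map_replicate_const)
        thus "map t xs \<in> rho" using \<open>gquord m rho\<close> unfolding gquord_def by simp
      qed
    qed
  qed
next
  fix n k :: nat and f :: "'a list \<Rightarrow> 'a" and gs
  assume a: "1 \<le> n \<and> 1 \<le> k \<and> star (End_of (gQuord_of M)) n f \<and> length gs = n \<and>
    (\<forall>g\<in>set gs. star (End_of (gQuord_of M)) k g)"
  show "star (End_of (gQuord_of M)) k (\<lambda>xs. f (map (\<lambda>g. g xs) gs))"
    unfolding star_def
  proof
    fix t assume "t \<in> trl k (\<lambda>xs. f (map (\<lambda>g. g xs) gs))"
    then obtain i as where t: "t = (\<lambda>x. f (map (\<lambda>g. g (as[i:=x])) gs))" and ik: "i < k" "length as = k"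
      unfolding trl_def by auto
    show "t \<in> End_of (gQuord_of M)"
      unfolding End_of_def preserves_def
    proof (clarify)
      fix m rho xs assume mr: "(m, rho) \<in> gQuord_of M" and xs: "xs \<in> rho"
      have g: "gquord m rho" using mr unfolding gQuord_of_def gQuord_all_def by auto
      have lx: "length xs = m" using gquord_len[OF g xs] .
      define R where "R j l = (gs!j) (as[i := xs!l])" for j l
      have "map (\<lambda>l. f (map (\<lambda>j. R j l) [0..<n])) [0..<m] \<in> rho"
      proof (rule trl_preserve_gen[OF g])
        show "\<forall>t\<in>trl n f. preserves t rho"
          using a mr unfolding star_def End_of_def by blast
        show "n \<le> n" by simp
        show "\<forall>j<n. map (R j) [0..<m] \<in> rho"
        proof (intro allI impI)
          fix j assume "j < n"
          hence "gs ! j \<in> set gs" using a by simp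
          hence st: "trl k (gs!j) \<subseteq> End_of (gQuord_of M)" using a unfolding star_def by blast
          have "(\<lambda>x. (gs!j) (as[i:=x])) \<in> trl k (gs!j)" using ik unfolding trl_def by auto
          hence "preserves (\<lambda>x. (gs!j) (as[i:=x])) rho" using st mr unfolding End_of_def by blast
          hence "map (\<lambda>x. (gs!j) (as[i:=x])) xs \<in> rho" using xs unfolding preserves_def by blast
          moreover have "map (\<lambda>x. (gs!j) (as[i:=x])) xs = map (R j) [0..<m]"
            using lx by (auto simp: R_def intro!: nth_equalityI)
          ultimately show "map (R j) [0..<m] \<in> rho" by simp
        qed
        show "\<forall>j. n \<le> j \<and> j < n \<longrightarrow> (\<forall>l<m. R j l = R j 0)" by auto
      qed
      moreover have "map (\<lambda>l. f (map (\<lambda>j. R j l) [0..<n])) [0..<m] = map t xs"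
      proof (rule nth_equalityI)
        fix l assume "l < length (map (\<lambda>l. f (map (\<lambda>j. R j l) [0..<n])) [0..<m])"
        hence l: "l < m" by simp
        have "map (\<lambda>j. R j l) [0..<n] = map (\<lambda>g. g (as[i:=xs!l])) gs"
          using a by (auto simp: R_def intro!: nth_equalityI)
        thus "map (\<lambda>l. f (map (\<lambda>j. R j l) [0..<n])) [0..<m] ! l = map t xs ! l"
          using l lx t by simp
      qed (simp add: lx)
      ultimately show "map t xs \<in> rho" by simp
    qed
  qed
qed

lemma dir1: "u_closure M \<subseteq> End_of (gQuord_of M)"
proof -
  have "M \<subseteq> End_of (gQuord_of M)" unfolding End_of_def gQuord_of_def by auto
  moreover have "is_monoid (End_of (gQuord_of M))"
    unfolding is_monoid_def End_of_def preserves_def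
  proof (intro conjI ballI, goal_cases)
    case 1 then show ?case by auto
  next
    case (2 g h)
    show ?case
    proof (clarify)
      fix a b xs assume "(a, b) \<in> gQuord_of M" "xs \<in> b"
      hence "map h xs \<in> b" using 2 by fastforce
      hence "map g (map h xs) \<in> b" using 2 \<open>(a, b) \<in> gQuord_of M\<close> by fastforce
      thus "map (g \<circ> h) xs \<in> b" by simp
    qed
  qed
  ultimately show ?thesis unfolding u_closure_def using End_clone by blast
qed

lemma dir2:
  fixes M :: "('a::finite \<Rightarrow> 'a) set"
  shows "End_of (gQuord_of M) \<subseteq> u_closure M"
  unfolding u_closure_def
proof (intro subsetI InterI)
  fix h N assume h: "h \<in> End_of (gQuord_of M)" and "N \<in> {N. M \<subseteq> N \<and> is_monoid N \<and> is_clone (star N)}"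
  hence MN: "M \<subseteq> N" and mon: "is_monoid N" and cl: "is_clone (star N)" by auto
  obtain e :: "'a list" where e: "set e = UNIV" "distinct e"
    using finite_distinct_list[OF finite_UNIV] by metis
  define m where "m = length e"
  define rho where "rho = {map g e | g. g \<in> N}"
  define idx where "idx x = (SOME i. i < m \<and> e!i = x)" for x
  have idx: "idx x < m \<and> e ! idx x = x" for x
  proof -
    have "\<exists>i. i < m \<and> e!i = x" using e(1) unfolding m_def by (metis UNIV_I in_set_conv_nth)
    thus ?thesis unfolding idx_def by (rule someI_ex)
  qed
  have idx2: "idx (e!i) = i" if "i < m" for i
    using idx[of "e!i"] e(2) that unfolding m_def by (metis nth_eq_iff_index_eq)
  have proj: "star N n (\<lambda>xs. xs ! i)" if "1 \<le> n" "i < n" for n i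
    using cl that unfolding is_clone_def by blast
  have const: "(\<lambda>_. a) \<in> N" for a
  proof -
    have "(\<lambda>x. ([a,a][1:=x]) ! 0) \<in> trl 2 (\<lambda>xs. xs ! 0)"
      unfolding trl_def by (rule CollectI, rule exI[of _ 1], rule exI[of _ "[a,a]"]) simp
    moreover have "(\<lambda>x. ([a,a][1:=x]) ! 0) = (\<lambda>_. a)" by simp
    ultimately show ?thesis using proj[of 2 0] unfolding star_def by auto
  qed
  have g: "gquord m rho"
    unfolding gquord_def
  proof (intro conjI allI impI)
    show "rho \<subseteq> {xs. length xs = m}" unfolding rho_def m_def by auto
  next
    fix a :: 'a
    have "replicate m a = map (\<lambda>_. a) e" unfolding m_def by (simp add: map_replicate_const)
    thus "replicate m a \<in> rho" unfolding rho_def using const by blast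
  next
    fix X :: "nat \<Rightarrow> nat \<Rightarrow> 'a"
    assume rc: "(\<forall>i<m. map (\<lambda>j. X i j) [0..<m] \<in> rho) \<and> (\<forall>j<m. map (\<lambda>i. X i j) [0..<m] \<in> rho)"
    define r where "r i = (SOME g. g \<in> N \<and> map (\<lambda>j. X i j) [0..<m] = map g e)" for i
    define c where "c j = (SOME g. g \<in> N \<and> map (\<lambda>i. X i j) [0..<m] = map g e)" for j
    have r: "r i \<in> N \<and> map (\<lambda>j. X i j) [0..<m] = map (r i) e" if "i < m" for i
    proof -
      have "\<exists>g. g \<in> N \<and> map (\<lambda>j. X i j) [0..<m] = map g e" using rc that unfolding rho_def by auto
      thus ?thesis unfolding r_def by (rule someI_ex)
    qed
    have c: "c j \<in> N \<and> map (\<lambda>i. X i j) [0..<m] = map (c j) e" if "j < m" for j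
    proof -
      have "\<exists>g. g \<in> N \<and> map (\<lambda>i. X i j) [0..<m] = map g e" using rc that unfolding rho_def by auto
      thus ?thesis unfolding c_def by (rule someI_ex)
    qed
    have Xr: "X i j = r i (e!j)" if "i < m" "j < m" for i j
    proof -
      have "map (\<lambda>j. X i j) [0..<m] ! j = map (r i) e ! j" using r[OF that(1)] by simp
      thus ?thesis using that unfolding m_def by simp
    qed
    have Xc: "X i j = c j (e!i)" if "i < m" "j < m" for i j
    proof -
      have "map (\<lambda>i. X i j) [0..<m] ! i = map (c j) e ! i" using c[OF that(2)] by simp
      thus ?thesis using that unfolding m_def by simp
    qed
    define F where "F xs = X (idx (xs!0)) (idx (xs!1))" for xs
    have sF: "star N 2 F"
      unfolding star_def
    proof
      fix t assume "t \<in> trl 2 F"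
      then obtain i' as where t: "t = (\<lambda>x. F (as[i':=x]))" and i': "i' < 2" and la: "length as = 2"
        unfolding trl_def by auto
      show "t \<in> N"
      proof (cases "i' = 0")
        case True
        have "t = c (idx (as!1))"
        proof
          fix x
          have "t x = X (idx x) (idx (as!1))" using t True la by (simp add: F_def nth_list_update)
          also have "\<dots> = c (idx (as!1)) x" using Xc[of "idx x" "idx (as!1)"] idx by simp
          finally show "t x = c (idx (as!1)) x" .
        qed
        thus ?thesis using c idx by simp
      next
        case False
        hence i1: "i' = 1" using i' by simp
        have "t = r (idx (as!0))"
        proof
          fix x
          have "t x = X (idx (as!0)) (idx x)" using t i1 la by (simp add: F_def nth_list_update)
          also have "\<dots> = r (idx (as!0)) x" using Xr[of "idx (as!0)" "idx x"] idx by simp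
          finally show "t x = r (idx (as!0)) x" .
        qed
        thus ?thesis using r idx by simp
      qed
    qed
    define G where "G xs = F (map (\<lambda>g. g xs) [\<lambda>xs. xs!0, \<lambda>xs. xs!(0::nat)])" for xs :: "'a list"
    have sG: "star N 1 G"
    proof -
      have p1: "star N 1 (\<lambda>xs. xs ! 0)" using proj[of 1 0] by simp
      have "\<forall>g\<in>set [\<lambda>xs. xs!0, \<lambda>xs. xs!(0::nat)]. star N 1 g" using p1 by simp
      thus ?thesis
        unfolding G_def
        using cl[unfolded is_clone_def, THEN conjunct2, rule_format, of 2 1 F "[\<lambda>xs. xs!0, \<lambda>xs. xs!0]"] sF
        by simp
    qed
    define d where "d x = F [x, x]" for x
    have dN: "d \<in> N"
    proof -
      have "(\<lambda>x. G ([undefined][0:=x])) \<in> trl 1 G"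
        unfolding trl_def by (rule CollectI, rule exI[of _ 0], rule exI[of _ "[undefined]"]) simp
      moreover have "(\<lambda>x. G ([undefined][0:=x])) = d" by (simp add: G_def d_def fun_eq_iff)
      ultimately show ?thesis using sG unfolding star_def by auto
    qed
    have "map (\<lambda>i. X i i) [0..<m] = map d e"
      by (rule nth_equalityI) (auto simp: m_def d_def F_def idx2[unfolded m_def])
    thus "map (\<lambda>i. X i i) [0..<m] \<in> rho" unfolding rho_def using dN by blast
  qed
  have inQ: "(m, rho) \<in> gQuord_of M"
    unfolding gQuord_of_def gQuord_all_def preserves_def
  proof (clarsimp simp: g)
    fix h' xs assume "h' \<in> M" "xs \<in> rho"
    then obtain g where "g \<in> N" "xs = map g e" unfolding rho_def by auto
    moreover have "h' \<circ> g \<in> N" using mon MN \<open>h' \<in> M\<close> \<open>g \<in> N\<close> unfolding is_monoid_def by blast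
    ultimately have "map h' xs = map (h' \<circ> g) e" "h' \<circ> g \<in> N" by simp_all
    thus "map h' xs \<in> rho" unfolding rho_def by blast
  qed
  have "e \<in> rho" unfolding rho_def using mon unfolding is_monoid_def
    by (metis (mono_tags, lifting) CollectI list.map_id)
  hence "map h e \<in> rho" using h inQ unfolding End_of_def preserves_def by blast
  then obtain g where gN: "g \<in> N" and he: "map h e = map g e" unfolding rho_def by auto
  have "h = g"
  proof
    fix x
    have "\<forall>x\<in>set e. h x = g x" using he by simp
    thus "h x = g x" using e(1) by simp
  qed
  thus "h \<in> N" using gN by simp
qed

theorem theorem4p2:
  fixes M :: "('a::finite \<Rightarrow> 'a) set"
  shows "u_closure M = End_of (gQuord_of M)"
  using dir1 dir2 by blast

end
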